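(* Let $n\ge1$, $q$ an indeterminate, $\mathcal F^n$ the Fock space with basis $|\lambda\rangle$ and dual basis $\langle\lambda|$ described in the context, with $z=1$, $Q^+(v)=\sum_r v^rQ^+_r$ the $Q^+$-operator, and $\tilde\beta_j(v)=Q^+(v)\beta_jQ^+(v)^{-1}=\sum_{b\ge0}v^b\tilde\beta_{j,b}$, $\tilde\beta^*_j(v)=Q^+(v)\beta^*_jQ^+(v)^{-1}=\sum_{b\ge0}v^b\tilde\beta^*_{j,b}$. Then for all $r\ge0$, all $j\in\{1,\dots,n\}$ and all partitions $\lambda,\mu$ with at most $n$ parts, $$\sum_{a+b=r}\sum_{\rho}(-1)^aN^{\tilde\rho}_{(a)\tilde\mu}(q)\,\langle\lambda|\tilde\beta_{j,b}|\rho\rangle=(-1)^r\,N^{\tilde\lambda}_{(r)\widetilde{\beta_j\mu}}(q),$$ $$\sum_{a+b=r}\sum_{\rho}\frac{(-1)^aN^{\tilde\rho}_{(a)\tilde\mu}(q)}{1-q^{2m_j(\mu)+2}}\,\langle\lambda|\tilde\beta^*_{j,b}|\rho\rangle=(-1)^r\,N^{\tilde\lambda}_{(r)\widetilde{\beta^*_j\mu}}(q),$$ where $\rho$ ranges over partitions with at most $n$ parts.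
   Context: $(q^2)_m:=\prod_{i=1}^m(1-q^{2i})$. $\mathcal F^n$: $\mathbb C(q)$-vector space with basis $|\lambda\rangle$, $\lambda$ partitions with at most $n$ parts; $m_j(\lambda)=\lambda_j-\lambda_{j+1}$ ($\lambda_{n+1}=0$) is the multiplicity of columns of height $j$ in the Young diagram of $\lambda$. $\langle\lambda|$ is the dual basis. Operators: $\beta_j^*|\lambda\rangle=(1-q^{2m_j(\lambda)+2})|\beta_j^*\lambda\rangle$, $\beta_j|\lambda\rangle=|\beta_j\lambda\rangle$ (zero if $m_j(\lambda)=0$), $q^{N_j}|\lambda\rangle=q^{m_j(\lambda)}|\lambda\rangle$, where $\beta_j^*\lambda$ (resp. $\beta_j\lambda$) denotes the partition obtained by inserting (resp. deleting) a column of height $j$ in the Young diagram. $Q^+(v)=\sum_r v^rQ^+_r$ with $Q^+_r=(-1)^r\sum_{\alpha}z^{\alpha_n}\frac{(\beta_1^* )^{\alpha_n}(\beta_1\beta_2^* )^{\alpha_1}\cdots(\beta_{n-1}\beta_n^* )^{\alpha_{n-1}}\beta_n^{\alpha_n}}{(q^2)_{\alpha_1}\cdots(q^2)_{\alpha_n}}$, the sum over compositions $\alpha\in\mathbb Z^n_{\ge0}$ of $r$, with $z=1$; $Q^+_0=1$ so $Q^+(v)$ is invertible as a power series in $v$. For a partition $\mu$, $\tilde\mu$ denotes $\mu$ with all columns of height $n$ removed. The (2D TQFT) fusion coefficients appearing here are $N^{\tilde\rho}_{(a)\tilde\mu}(q)=(-1)^a\langle\rho|Q^+_a|\mu\rangle$.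 If $\mu$ has no column of height $j$, $N^{\tilde\lambda}_{(r)\widetilde{\beta_j\mu}}$ is read as $0$. *)

theory Defs
  imports "HOL-Computational_Algebra.Polynomial" "HOL-Computational_Algebra.Fraction_Field"
begin

text \<open>Coefficient field C(q) = fractions of complex polynomials; q is the indeterminate.\<close>
type_synonym K = "complex poly fract"

text \<open>A partition with at most n parts is a function lam with lam i = lam_i for 1 <= i <= n,
  lam i = 0 for i = 0 and i > n, and lam_1 >= lam_2 >= ... .\<close>
type_synonym part = "nat \<Rightarrow> nat"

text \<open>An operator on F^n is given by its matrix: A lam mu = <lam|A|mu>.\<close>
type_synonym opr = "part \<Rightarrow> part \<Rightarrow> K"

definition qq :: K where "qq = Fract [:0, 1:] 1"

definition qpoch :: "nat \<Rightarrow> K" where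
  "qpoch m = (\<Prod>i=1..m. 1 - qq ^ (2 * i))"

definition is_part :: "nat \<Rightarrow> part \<Rightarrow> bool" where
  "is_part n lam \<longleftrightarrow> (\<forall>i. i = 0 \<or> n < i \<longrightarrow> lam i = 0) \<and> (\<forall>i. 1 \<le> i \<longrightarrow> lam (Suc i) \<le> lam i)"

text \<open>m_j(lam) = lam_j - lam_(j+1): number of columns of height j.\<close>
definition mult :: "nat \<Rightarrow> part \<Rightarrow> nat" where
  "mult j lam = lam j - lam (Suc j)"

definition ins_col :: "nat \<Rightarrow> part \<Rightarrow> part" where
  "ins_col j lam = (\<lambda>i. if 1 \<le> i \<and> i \<le> j then lam i + 1 else lam i)"

definition del_col :: "nat \<Rightarrow> part \<Rightarrow> part" where
  "del_col j lam = (\<lambda>i. if 1 \<le> i \<and> i \<le> j then lam i - 1 else lam i)"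

definition fsum :: "'a set \<Rightarrow> ('a \<Rightarrow> K) \<Rightarrow> K" where
  "fsum S f = sum f {x \<in> S. f x \<noteq> 0}"

definition op_id :: opr where
  "op_id lam mu = (if lam = mu then 1 else 0)"

text \<open>Composition of (column-finite) operators.\<close>
definition op_mult :: "opr \<Rightarrow> opr \<Rightarrow> opr" where
  "op_mult A B = (\<lambda>lam mu. fsum UNIV (\<lambda>rho. A lam rho * B rho mu))"

definition op_pow :: "opr \<Rightarrow> nat \<Rightarrow> opr" where
  "op_pow A k = (op_mult A ^^ k) op_id"

text \<open>beta_j |mu> = |beta_j mu> (0 if m_j(mu) = 0);
  beta_j^* |mu> = (1 - q^(2 m_j(mu) + 2)) |beta_j^* mu>.\<close>
definition beta :: "nat \<Rightarrow> opr" where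
  "beta j lam mu = (if 0 < mult j mu \<and> lam = del_col j mu then 1 else 0)"

definition betaS :: "nat \<Rightarrow> opr" where
  "betaS j lam mu = (if lam = ins_col j mu then 1 - qq ^ (2 * mult j mu + 2) else 0)"

definition comps :: "nat \<Rightarrow> nat \<Rightarrow> (nat \<Rightarrow> nat) set" where
  "comps n r = {alpha. (\<forall>i. alpha i \<noteq> 0 \<longrightarrow> 1 \<le> i \<and> i \<le> n) \<and> (\<Sum>i=1..n. alpha i) = r}"

definition Qterm :: "nat \<Rightarrow> (nat \<Rightarrow> nat) \<Rightarrow> opr" where
  "Qterm n alpha =
     op_mult (op_pow (betaS 1) (alpha n))
       (op_mult (foldr op_mult (map (\<lambda>i. op_pow (op_mult (beta i) (betaS (Suc i))) (alpha i)) [1..<n]) op_id)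
                (op_pow (beta n) (alpha n)))"

text \<open>Q^+_r with z = 1.\<close>
definition Qp :: "nat \<Rightarrow> nat \<Rightarrow> opr" where
  "Qp n r = (\<lambda>lam mu. (-1) ^ r * (\<Sum>alpha\<in>comps n r. Qterm n alpha lam mu / (\<Prod>i=1..n. qpoch (alpha i))))"

text \<open>Coefficients of Q^+(v)^(-1) (Q^+_0 = 1).\<close>
fun Qinv :: "nat \<Rightarrow> nat \<Rightarrow> opr" where
  "Qinv n 0 = op_id"
| "Qinv n (Suc d) = (\<lambda>lam mu. - (\<Sum>k\<in>{1..Suc d}. op_mult (Qp n k) (Qinv n (Suc d - k)) lam mu))"

text \<open>Coefficients of v^b in Q^+(v) beta_j Q^+(v)^(-1) and Q^+(v) beta_j^* Q^+(v)^(-1).\<close>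
definition tbeta :: "nat \<Rightarrow> nat \<Rightarrow> nat \<Rightarrow> opr" where
  "tbeta n j b = (\<lambda>lam mu. \<Sum>c\<le>b. op_mult (op_mult (Qp n c) (beta j)) (Qinv n (b - c)) lam mu)"

definition tbetaS :: "nat \<Rightarrow> nat \<Rightarrow> nat \<Rightarrow> opr" where
  "tbetaS n j b = (\<lambda>lam mu. \<Sum>c\<le>b. op_mult (op_mult (Qp n c) (betaS j)) (Qinv n (b - c)) lam mu)"

text \<open>Fusion coefficient N^{rho~}_{(a) mu~}(q) = (-1)^a <rho|Q^+_a|mu>.\<close>
definition Ncoef :: "nat \<Rightarrow> nat \<Rightarrow> part \<Rightarrow> part \<Rightarrow> K" where
  "Ncoef n a rho mu = (-1) ^ a * Qp n a rho mu"

end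

theory Submission
  imports Defs "HOL-Computational_Algebra.Formal_Power_Series"
begin


definition cs :: "opr \<Rightarrow> part \<Rightarrow> part set" where "cs A mu = {lam. A lam mu \<noteq> 0}"

lemma fsum_eq:
  assumes "finite T" "{x. f x \<noteq> 0} \<subseteq> T"
  shows "fsum UNIV f = sum f T"
proof -
  have "fsum UNIV f = sum f {x. f x \<noteq> 0}" by (simp add: fsum_def)
  also have "\<dots> = sum f T" by (rule sum.mono_neutral_left) (use assms in auto)
  finally show ?thesis .
qed

lemma op_mult_eq:
  assumes "finite T" "cs B mu \<subseteq> T"
  shows "op_mult A B lam mu = (\<Sum>rho\<in>T. A lam rho * B rho mu)"
  unfolding op_mult_def by (rule fsum_eq) (use assms in \<open>auto simp: cs_def\<close>)

lemma fsum_nz: "fsum S f \<noteq> 0 \<Longrightarrow> \<exists>x\<in>S. f x \<noteq> 0"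
  unfolding fsum_def by (metis (mono_tags, lifting) mem_Collect_eq sum.not_neutral_contains_not_neutral)

lemma op_mult_nz: "op_mult A B lam mu \<noteq> 0 \<Longrightarrow> \<exists>rho. A lam rho \<noteq> 0 \<and> B rho mu \<noteq> 0"
  unfolding op_mult_def using fsum_nz by fastforce

lemma cs_mult_sub: "cs (op_mult A B) mu \<subseteq> (\<Union>rho\<in>cs B mu. cs A rho)"
  using op_mult_nz unfolding cs_def by fastforce

lemma fin_mult: "finite (cs B mu) \<Longrightarrow> (\<forall>rho. finite (cs A rho)) \<Longrightarrow> finite (cs (op_mult A B) mu)"
  by (meson cs_mult_sub finite_UN_I finite_subset)

lemma op_mult_assoc:
  assumes B: "\<forall>mu. finite (cs B mu)" and C: "\<forall>mu. finite (cs C mu)"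
  shows "op_mult (op_mult A B) C = op_mult A (op_mult B C)"
proof (intro ext)
  fix lam mu
  define U where "U = (\<Union>rho\<in>cs C mu. cs B rho)"
  have fU: "finite U" using B C unfolding U_def by auto
  have "op_mult (op_mult A B) C lam mu = (\<Sum>rho\<in>cs C mu. op_mult A B lam rho * C rho mu)"
    by (rule op_mult_eq) (use C in auto)
  also have "\<dots> = (\<Sum>rho\<in>cs C mu. (\<Sum>s\<in>U. A lam s * B s rho) * C rho mu)"
    by (intro sum.cong refl arg_cong2[where f="(*)"] op_mult_eq fU) (auto simp: U_def)
  also have "\<dots> = (\<Sum>s\<in>U. A lam s * (\<Sum>rho\<in>cs C mu. B s rho * C rho mu))"
    by (simp add: sum_distrib_left sum_distrib_right mult.assoc) (rule sum.swap)
  also have "\<dots> = (\<Sum>s\<in>U. A lam s * op_mult B C s mu)"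
    by (intro sum.cong refl arg_cong2[where f="(*)"] op_mult_eq[symmetric]) (use C in auto)
  also have "\<dots> = op_mult A (op_mult B C) lam mu"
    by (rule op_mult_eq[symmetric, OF fU]) (use cs_mult_sub U_def in auto)
  finally show "op_mult (op_mult A B) C lam mu = op_mult A (op_mult B C) lam mu" .
qed

lemma cs_id: "cs op_id mu = {mu}" by (auto simp: cs_def op_id_def)

lemma op_mult_id_left: "finite (cs A mu) \<Longrightarrow> op_mult op_id A lam mu = A lam mu"
proof -
  assume f: "finite (cs A mu)"
  have "op_mult op_id A lam mu = (\<Sum>rho\<in>insert lam (cs A mu). op_id lam rho * A rho mu)"
    by (rule op_mult_eq) (use f in auto)
  also have "\<dots> = (\<Sum>rho\<in>insert lam (cs A mu). if rho = lam then A lam mu else 0)"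
    by (intro sum.cong) (auto simp: op_id_def)
  also have "\<dots> = A lam mu" using f by (simp add: sum.delta)
  finally show ?thesis .
qed

lemma op_mult_id_right: "op_mult A op_id lam mu = A lam mu"
  by (subst op_mult_eq[of "{mu}"]) (auto simp: op_id_def cs_def)

lemma distl: "finite (cs C mu) \<Longrightarrow> op_mult (\<lambda>l m. A l m + B l m) C lam mu = op_mult A C lam mu + op_mult B C lam mu"
  by (simp add: op_mult_eq[of "cs C mu"] distrib_right sum.distrib)

lemma distr: "finite (cs B mu) \<Longrightarrow> finite (cs C mu) \<Longrightarrow> op_mult A (\<lambda>l m. B l m + C l m) lam mu = op_mult A B lam mu + op_mult A C lam mu"
proof -
  assume f: "finite (cs B mu)" "finite (cs C mu)"
  let ?T = "cs B mu \<union> cs C mu"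
  have a: "op_mult A (\<lambda>l m. B l m + C l m) lam mu = (\<Sum>rho\<in>?T. A lam rho * (B rho mu + C rho mu))"
    by (rule op_mult_eq) (use f in \<open>auto simp: cs_def\<close>)
  have b: "op_mult A B lam mu = (\<Sum>rho\<in>?T. A lam rho * B rho mu)"
    by (rule op_mult_eq) (use f in \<open>auto simp: cs_def\<close>)
  have c: "op_mult A C lam mu = (\<Sum>rho\<in>?T. A lam rho * C rho mu)"
    by (rule op_mult_eq) (use f in \<open>auto simp: cs_def\<close>)
  show ?thesis unfolding a b c by (simp add: distrib_left sum.distrib)
qed

lemma fin_binop:
  assumes "\<forall>mu. finite (cs A mu)" "\<forall>mu. finite (cs B mu)" "f 0 0 = (0::complex poly fract)"
  shows "\<forall>mu. finite (cs (\<lambda>lam mu. f (A lam mu) (B lam mu)) mu)"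
proof (intro allI)
  fix mu have "cs (\<lambda>lam mu. f (A lam mu) (B lam mu)) mu \<subseteq> cs A mu \<union> cs B mu" using assms(3) by (auto simp: cs_def)
  then show "finite (cs (\<lambda>lam mu. f (A lam mu) (B lam mu)) mu)" by (meson finite_UnI finite_subset assms)
qed

typedef cfop = "{A::opr. \<forall>mu. finite (cs A mu)}" morphisms Rep Abs
  by (rule exI[of _ "\<lambda>_ _. 0"]) (simp add: cs_def)

setup_lifting type_definition_cfop

instantiation cfop :: ring_1
begin
lift_definition zero_cfop :: cfop is "\<lambda>_ _. 0" by (simp add: cs_def)
lift_definition one_cfop :: cfop is op_id by (simp add: cs_id)
lift_definition plus_cfop :: "cfop \<Rightarrow> cfop \<Rightarrow> cfop" is "\<lambda>A B lam mu. A lam mu + B lam mu"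
  using fin_binop[of _ _ "(+)"] by simp
lift_definition uminus_cfop :: "cfop \<Rightarrow> cfop" is "\<lambda>A lam mu. - A lam mu" by (simp add: cs_def)
lift_definition minus_cfop :: "cfop \<Rightarrow> cfop \<Rightarrow> cfop" is "\<lambda>A B lam mu. A lam mu - B lam mu"
  using fin_binop[of _ _ "(-)"] by simp
lift_definition times_cfop :: "cfop \<Rightarrow> cfop \<Rightarrow> cfop" is op_mult by (simp add: fin_mult)
instance
proof
  fix a b c :: cfop
  show "a * b * c = a * (b * c)" by transfer (simp add: op_mult_assoc)
  show "(a + b) * c = a * c + b * c" by transfer (auto simp: distl intro!: ext)
  show "a * (b + c) = a * b + a * c" by transfer (auto simp: distr intro!: ext)
  show "1 * a = a" by transfer (auto simp: op_mult_id_left intro!: ext)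
  show "a * 1 = a" by transfer (auto simp: op_mult_id_right intro!: ext)
  show "a + b + c = a + (b + c)" by transfer (auto simp: algebra_simps)
  show "a + b = b + a" by transfer (auto simp: algebra_simps)
  show "0 + a = a" by transfer auto
  show "- a + a = 0" by transfer auto
  show "a - b = a + - b" by transfer auto
  show "(0::cfop) \<noteq> 1" by transfer (metis op_id_def one_neq_zero)
qed
end



lemma Rep_mult: "Rep (x * y) = op_mult (Rep x) (Rep y)" by (simp add: times_cfop.rep_eq)
lemma Rep_one: "Rep 1 = op_id" by (simp add: one_cfop.rep_eq)

lemma Rep_sum: "Rep (sum f S) lam mu = (\<Sum>x\<in>S. Rep (f x) lam mu)"
proof (induction S rule: infinite_finite_induct)
  case (infinite A) then show ?case by (simp add: zero_cfop.rep_eq)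
next
  case empty then show ?case by (simp add: zero_cfop.rep_eq)
next
  case (insert x F) then show ?case by (simp add: plus_cfop.rep_eq)
qed

lemma Rep_power: "Rep (x ^ k) = op_pow (Rep x) k"
  by (induction k) (simp_all add: op_pow_def Rep_one Rep_mult)

lemma Rep_foldr: "Rep (foldr (*) xs 1) = foldr op_mult (map Rep xs) op_id"
  by (induction xs) (simp_all add: Rep_one Rep_mult)

definition scale :: "K \<Rightarrow> cfop \<Rightarrow> cfop" where "scale c A = Abs (\<lambda>lam mu. c * Rep A lam mu)"

lemma scale_rep_eq: "Rep (scale c A) = (\<lambda>lam mu. c * Rep A lam mu)"
  unfolding scale_def
proof (rule Abs_inverse, safe)
  fix mu
  have "cs (\<lambda>lam mu. c * Rep A lam mu) mu \<subseteq> cs (Rep A) mu" by (auto simp: cs_def)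
  then show "finite (cs (\<lambda>lam mu. c * Rep A lam mu) mu)" using Rep[of A] by (auto intro: finite_subset)
qed

lemma cs_beta: "cs (beta j) mu \<subseteq> {del_col j mu}" by (auto simp: cs_def beta_def)
lemma cs_betaS: "cs (betaS j) mu \<subseteq> {ins_col j mu}" by (auto simp: cs_def betaS_def)

lift_definition Bo :: "nat \<Rightarrow> cfop" is beta using cs_beta by (meson finite.emptyI finite_insert finite_subset)
lift_definition BSo :: "nat \<Rightarrow> cfop" is betaS using cs_betaS by (meson finite.emptyI finite_insert finite_subset)

definition Qt :: "nat \<Rightarrow> (nat \<Rightarrow> nat) \<Rightarrow> cfop" where
  "Qt n alpha = BSo 1 ^ alpha n * (foldr (*) (map (\<lambda>i. (Bo i * BSo (Suc i)) ^ alpha i) [1..<n]) 1 * Bo n ^ alpha n)"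

lemma Rep_Qt: "Rep (Qt n alpha) = Qterm n alpha"
  by (simp add: Qt_def Qterm_def Rep_mult Rep_power Rep_foldr o_def Bo.rep_eq BSo.rep_eq)

definition Qc :: "nat \<Rightarrow> nat \<Rightarrow> cfop" where
  "Qc n r = scale ((-1) ^ r) (\<Sum>alpha\<in>comps n r. scale (1 / (\<Prod>i=1..n. qpoch (alpha i))) (Qt n alpha))"

lemma Rep_Qc: "Rep (Qc n r) = Qp n r"
  by (intro ext) (simp add: Qc_def Qp_def scale_rep_eq Rep_sum Rep_Qt)



lemma comps0: "comps n 0 = {\<lambda>_. 0}"
proof -
  have *: "alpha = (\<lambda>_. 0)" if "alpha \<in> comps n 0" for alpha
  proof
    fix i
    from that have s: "(\<Sum>i=1..n. alpha i) = 0" and z: "\<forall>i. alpha i \<noteq> 0 \<longrightarrow> 1 \<le> i \<and> i \<le> n"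
      unfolding comps_def mem_Collect_eq by (blast, blast)
    from s have "\<forall>i\<in>{1..n}. alpha i = 0" by (simp only: sum_eq_0_iff finite_atLeastAtMost)
    with z show "alpha i = 0" by (meson atLeastAtMost_iff)
  qed
  have "(\<lambda>_. 0) \<in> comps n 0" unfolding comps_def by (rule CollectI, rule conjI) (blast, rule sum.neutral_const)
  then show ?thesis using * by blast
qed

lemma foldr_ones: "foldr (*) (map (\<lambda>i. (1::cfop)) xs) 1 = 1" by (induction xs) auto

lemma scale1: "scale 1 x = x" by (simp add: scale_def Rep_inverse)

lemma Qt0: "Qt n (\<lambda>_. 0) = 1"
  unfolding Qt_def power_0 by (simp only: foldr_ones mult_1_left mult_1_right)

lemma sum_sing: "sum f {x} = f x" by simp

lemma qpoch0: "qpoch 0 = 1" by (simp add: qpoch_def)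

lemma Qc0: "Qc n 0 = 1"
  unfolding Qc_def comps0 sum_sing Qt0 qpoch0 prod.neutral_const power_0 div_by_1 scale1 by (rule refl)

definition Qf :: "nat \<Rightarrow> cfop fps" where "Qf n = Abs_fps (Qc n)"

lemma Qf_nth: "fps_nth (Qf n) k = Qc n k" by (simp add: Qf_def)

fun rinv :: "'a::ring_1 fps \<Rightarrow> nat \<Rightarrow> 'a" where
  "rinv f 0 = 1"
| "rinv f (Suc d) = - (\<Sum>k\<in>{1..Suc d}. fps_nth f k * rinv f (Suc d - k))"

lemma rinv_right:
  fixes f :: "'a::ring_1 fps"
  assumes "fps_nth f 0 = 1" shows "f * Abs_fps (rinv f) = 1"
proof (rule fps_ext)
  fix m show "fps_nth (f * Abs_fps (rinv f)) m = fps_nth 1 m"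
  proof (cases m)
    case 0 then show ?thesis using assms by simp
  next
    case (Suc d)
    have "fps_nth (f * Abs_fps (rinv f)) m = fps_nth f 0 * rinv f (Suc d) + (\<Sum>i\<in>{1..Suc d}. fps_nth f i * rinv f (Suc d - i))"
      unfolding fps_mult_nth Suc by (subst sum.atLeast_Suc_atMost) auto
    also have "\<dots> = 0" using assms by simp
    finally show ?thesis using Suc by simp
  qed
qed

lemma left_inv:
  fixes f g :: "'a::ring_1 fps"
  assumes "f * g = 1" "fps_nth g 0 = 1" shows "g * f = 1"
proof -
  define h where "h = Abs_fps (rinv g)"
  have gh: "g * h = 1" unfolding h_def by (rule rinv_right[OF assms(2)])
  have "f = f * (g * h)" by (simp add: gh)
  also have "\<dots> = h" by (simp add: mult.assoc[symmetric] assms(1))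
  finally show ?thesis using gh by simp
qed

lemma Rep_rinv: "Rep (rinv (Qf n) d) = Qinv n d"
proof (induction d rule: less_induct)
  case (less d) show ?case
  proof (cases d)
    case 0 then show ?thesis by (simp add: Rep_one)
  next
    case (Suc e)
    have "Rep (rinv (Qf n) d) lam mu = Qinv n d lam mu" for lam mu
    proof -
      have "Rep (rinv (Qf n) d) lam mu = - (\<Sum>k\<in>{1..Suc e}. Rep (fps_nth (Qf n) k * rinv (Qf n) (Suc e - k)) lam mu)"
        by (simp only: Suc rinv.simps uminus_cfop.rep_eq Rep_sum)
      also have "\<dots> = - (\<Sum>k\<in>{1..Suc e}. op_mult (Qp n k) (Qinv n (Suc e - k)) lam mu)"
        by (intro arg_cong[where f=uminus] sum.cong refl) (auto simp: Rep_mult Qf_nth Rep_Qc less.IH Suc)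
      also have "\<dots> = Qinv n d lam mu" by (simp add: Suc)
      finally show ?thesis .
    qed
    then show ?thesis by auto
  qed
qed



definition pp :: "nat \<Rightarrow> opr \<Rightarrow> bool" where
  "pp n A \<longleftrightarrow> (\<forall>mu rho. is_part n mu \<longrightarrow> A rho mu \<noteq> 0 \<longrightarrow> is_part n rho)"

lemma pp_mult: assumes a: "pp n A" and b: "pp n B" shows "pp n (op_mult A B)"
  unfolding pp_def
proof (intro allI impI)
  fix mu rho assume mu: "is_part n mu" and nz: "op_mult A B rho mu \<noteq> 0"
  obtain s where s: "A rho s \<noteq> 0" "B s mu \<noteq> 0" using op_mult_nz[OF nz] by blast
  have "is_part n s" using b mu s(2) unfolding pp_def by blast
  then show "is_part n rho" using a s(1) unfolding pp_def by blast
qed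

lemma pp_id: "pp n op_id" by (simp add: pp_def op_id_def)

lemma pp_pow: "pp n A \<Longrightarrow> pp n (op_pow A k)"
  by (induction k) (simp_all add: op_pow_def pp_id pp_mult)

lemma pp_foldr: "(\<forall>x\<in>set xs. pp n x) \<Longrightarrow> pp n (foldr op_mult xs op_id)"
  by (induction xs) (simp_all add: pp_id pp_mult)

lemma part_zero: assumes p: "is_part n mu" and "i = 0 \<or> n < i" shows "mu i = 0"
proof -
  have "\<forall>i. i = 0 \<or> n < i \<longrightarrow> mu i = 0" using p unfolding is_part_def by (rule conjunct1)
  then have "i = 0 \<or> n < i \<longrightarrow> mu i = 0" by (rule spec)
  then show ?thesis using assms(2) by (rule mp)
qed

lemma part_mono: assumes p: "is_part n mu" and "1 \<le> i" shows "mu (Suc i) \<le> mu i"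
proof -
  have "\<forall>i. 1 \<le> i \<longrightarrow> mu (Suc i) \<le> mu i" using p unfolding is_part_def by (rule conjunct2)
  then have "1 \<le> i \<longrightarrow> mu (Suc i) \<le> mu i" by (rule spec)
  then show ?thesis using assms(2) by (rule mp)
qed

lemma part_ins:
  assumes p: "is_part n mu" and j: "1 \<le> j" "j \<le> n" shows "is_part n (ins_col j mu)"
  unfolding is_part_def
proof (intro conjI allI impI)
  fix i assume "i = 0 \<or> n < i"
  moreover have "mu i = 0" using p \<open>i = 0 \<or> n < i\<close> by (rule part_zero)
  moreover have "\<not> (1 \<le> i \<and> i \<le> j)" using \<open>i = 0 \<or> n < i\<close> j by linarith
  ultimately show "ins_col j mu i = 0" unfolding ins_col_def by simp
next
  fix i :: nat assume i: "1 \<le> i"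
  have "mu (Suc i) \<le> mu i" using p i by (rule part_mono)
  then show "ins_col j mu (Suc i) \<le> ins_col j mu i" using i unfolding ins_col_def by simp
qed

lemma part_del:
  assumes p: "is_part n mu" and m: "0 < mult j mu" and j: "1 \<le> j" "j \<le> n" shows "is_part n (del_col j mu)"
  unfolding is_part_def
proof (intro conjI allI impI)
  fix i assume "i = 0 \<or> n < i"
  moreover have "mu i = 0" using p \<open>i = 0 \<or> n < i\<close> by (rule part_zero)
  moreover have "\<not> (1 \<le> i \<and> i \<le> j)" using \<open>i = 0 \<or> n < i\<close> j by linarith
  ultimately show "del_col j mu i = 0" unfolding del_col_def by simp
next
  fix i :: nat assume i: "1 \<le> i"
  have "mu (Suc i) \<le> mu i" using p i by (rule part_mono)
  moreover have "mu (Suc j) < mu j" using m unfolding mult_def by simp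
  ultimately show "del_col j mu (Suc i) \<le> del_col j mu i"
  proof (cases "Suc i \<le> j")
    case False
    then show ?thesis using i \<open>mu (Suc i) \<le> mu i\<close> \<open>mu (Suc j) < mu j\<close> unfolding del_col_def
      by (cases "i = j") simp_all
  qed (use i in \<open>simp add: del_col_def diff_le_mono\<close>)
qed

lemma pp_beta: "1 \<le> j \<Longrightarrow> j \<le> n \<Longrightarrow> pp n (beta j)"
  unfolding pp_def beta_def by (auto intro: part_del split: if_splits)

lemma pp_betaS: "1 \<le> j \<Longrightarrow> j \<le> n \<Longrightarrow> pp n (betaS j)"
  unfolding pp_def betaS_def by (auto intro: part_ins split: if_splits)

lemma pp_Qterm: assumes n: "1 \<le> n" shows "pp n (Qterm n alpha)"
proof -
  have f: "\<forall>x\<in>set (map (\<lambda>i. op_pow (op_mult (beta i) (betaS (Suc i))) (alpha i)) [1..<n]). pp n x"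
  proof
    fix x assume "x \<in> set (map (\<lambda>i. op_pow (op_mult (beta i) (betaS (Suc i))) (alpha i)) [1..<n])"
    then obtain i where i: "1 \<le> i" "i < n" and x: "x = op_pow (op_mult (beta i) (betaS (Suc i))) (alpha i)"
      by auto
    show "pp n x" unfolding x using i by (intro pp_pow pp_mult pp_beta pp_betaS) simp_all
  qed
  show ?thesis unfolding Qterm_def
    by (intro pp_mult pp_pow pp_beta pp_betaS pp_foldr f order_refl n)
qed

lemma pp_Qp: assumes "1 \<le> n" shows "pp n (Qp n r)"
  unfolding pp_def
proof (intro allI impI)
  fix mu rho assume mu: "is_part n mu" and nz: "Qp n r rho mu \<noteq> 0"
  then have "(\<Sum>alpha\<in>comps n r. Qterm n alpha rho mu / (\<Prod>i=1..n. qpoch (alpha i))) \<noteq> 0"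
    by (simp add: Qp_def)
  then obtain alpha where "Qterm n alpha rho mu / (\<Prod>i=1..n. qpoch (alpha i)) \<noteq> 0"
    using sum.not_neutral_contains_not_neutral by blast
  then have "Qterm n alpha rho mu \<noteq> 0" by auto
  then show "is_part n rho" using pp_Qterm[OF assms] mu unfolding pp_def by blast
qed

lemma fsum_restrict: "(\<And>x. f x \<noteq> 0 \<Longrightarrow> x \<in> S) \<Longrightarrow> fsum S f = fsum UNIV f"
  unfolding fsum_def by (metis (mono_tags, lifting) Collect_cong UNIV_I)

lemma fsum_div: "fsum S (\<lambda>x. f x / c) = fsum S f / c"
proof (cases "c = 0")
  case False
  then have "{x \<in> S. f x / c \<noteq> 0} = {x \<in> S. f x \<noteq> 0}" by auto
  then show ?thesis unfolding fsum_def using False by (simp add: sum_divide_distrib)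
qed (simp add: fsum_def)

lemma qq_pow: "qq ^ k = Fract ([:0, 1:] ^ k) 1"
  by (induction k) (simp_all add: qq_def One_fract_def)

lemma qq_ne: "1 - qq ^ Suc k \<noteq> 0"
proof
  assume "1 - qq ^ Suc k = 0"
  then have "qq ^ Suc k = 1" by simp
  then have "Fract ([:0, 1:] ^ Suc k) 1 = Fract (1::complex poly) 1" unfolding qq_pow One_fract_def .
  then have "([:0, 1:] ^ Suc k :: complex poly) = 1" by (simp add: eq_fract)
  then have "degree ([:0, 1:] ^ Suc k :: complex poly) = 0" by simp
  moreover have "degree ([:0, 1:] ^ Suc k :: complex poly) = Suc k" by (simp add: degree_power_eq)
  ultimately show False by simp
qed

lemma conj_sum:
  assumes X: "Rep Xo = X" and n: "1 \<le> n"
  shows "(\<Sum>a\<le>r. op_mult (\<lambda>l m. \<Sum>c\<le>r - a. op_mult (op_mult (Qp n c) X) (Qinv n (r - a - c)) l m) (Qp n a) lam mu)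
         = op_mult (Qp n r) X lam mu"
proof -
  define Q where "Q = Qf n"
  define R where "R = Abs_fps (rinv Q)"
  have Q0: "fps_nth Q 0 = 1" by (simp add: Q_def Qf_def Qc0)
  have QR: "Q * R = 1" unfolding R_def by (rule rinv_right[OF Q0])
  have RQ: "R * Q = 1" by (rule left_inv[OF QR]) (simp add: R_def)
  have Qn: "Rep (fps_nth Q k) = Qp n k" for k by (simp add: Q_def Qf_def Rep_Qc)
  have Rn: "Rep (fps_nth R k) = Qinv n k" for k by (simp add: R_def Q_def Rep_rinv)
  define T where "T = Q * fps_const Xo * R"
  have Tn: "Rep (fps_nth T b) l m = (\<Sum>c\<le>b. op_mult (op_mult (Qp n c) X) (Qinv n (b - c)) l m)" for b l m
    by (simp add: T_def fps_mult_nth fps_const_mult_right Rep_sum Rep_mult Qn Rn X atLeast0AtMost)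
  have "(\<Sum>a\<le>r. op_mult (\<lambda>l m. \<Sum>c\<le>r - a. op_mult (op_mult (Qp n c) X) (Qinv n (r - a - c)) l m) (Qp n a) lam mu)
      = (\<Sum>a\<le>r. Rep (fps_nth T (r - a) * fps_nth Q a) lam mu)"
    by (intro sum.cong refl) (simp add: Rep_mult Qn Tn[abs_def])
  also have "\<dots> = (\<Sum>i=0..r. Rep (fps_nth T i * fps_nth Q (r - i)) lam mu)"
    by (subst sum.atLeastAtMost_rev) (simp add: atLeast0AtMost)
  also have "\<dots> = Rep (fps_nth (T * Q) r) lam mu"
    by (simp add: fps_mult_nth Rep_sum)
  also have "T * Q = Q * fps_const Xo"
    by (simp add: T_def mult.assoc RQ)
  also have "Rep (fps_nth (Q * fps_const Xo) r) lam mu = op_mult (Qp n r) X lam mu"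
    by (simp add: fps_const_mult_right Rep_mult Qn X)
  finally show ?thesis .
qed



lemma sq1: "(-1::K) ^ a * (-1) ^ a = 1"
  by (simp add: power_mult_distrib[symmetric])

lemma sgn2: "(-1::K) ^ a * ((-1) ^ a * x) = x"
  by (simp add: mult.assoc[symmetric] sq1)

lemma sgn_lemma: "(-1::K) ^ a * ((-1) ^ a * x) * y = y * x"
  by (simp add: sgn2 mult.commute)

lemma fsum_to_mult:
  assumes n: "1 \<le> n" and mu: "is_part n mu"
  shows "fsum {rho. is_part n rho} (\<lambda>rho. T lam rho * Qp n a rho mu) = op_mult T (Qp n a) lam mu"
proof -
  have "fsum {rho. is_part n rho} (\<lambda>rho. T lam rho * Qp n a rho mu) = fsum UNIV (\<lambda>rho. T lam rho * Qp n a rho mu)"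
  proof (rule fsum_restrict)
    fix rho assume "T lam rho * Qp n a rho mu \<noteq> 0"
    then have "Qp n a rho mu \<noteq> 0" by simp
    then show "rho \<in> {rho. is_part n rho}" using pp_Qp[OF n, of a] mu unfolding pp_def by simp
  qed
  then show ?thesis by (simp add: op_mult_def)
qed

theorem mainTheorem2:
  fixes n r j :: nat and lam mu :: part
  assumes "1 \<le> n" and "1 \<le> j" and "j \<le> n"
    and "is_part n lam" and "is_part n mu"
  shows "(\<Sum>a\<le>r. fsum {rho. is_part n rho}
            (\<lambda>rho. (-1) ^ a * Ncoef n a rho mu * tbeta n j (r - a) lam rho))
         = (if 0 < mult j mu then (-1) ^ r * Ncoef n r lam (del_col j mu) else 0)
       \<and> (\<Sum>a\<le>r. fsum {rho. is_part n rho}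
            (\<lambda>rho. (-1) ^ a * Ncoef n a rho mu / (1 - qq ^ (2 * mult j mu + 2)) * tbetaS n j (r - a) lam rho))
         = (-1) ^ r * Ncoef n r lam (ins_col j mu)"
proof
  note n = assms(1) and mu = assms(5)
  have "(\<Sum>a\<le>r. fsum {rho. is_part n rho}
            (\<lambda>rho. (-1) ^ a * Ncoef n a rho mu * tbeta n j (r - a) lam rho))
      = (\<Sum>a\<le>r. op_mult (tbeta n j (r - a)) (Qp n a) lam mu)"
  proof (rule sum.cong[OF refl])
    fix a
    have "(\<lambda>rho. (-1) ^ a * Ncoef n a rho mu * tbeta n j (r - a) lam rho)
        = (\<lambda>rho. tbeta n j (r - a) lam rho * Qp n a rho mu)"
      unfolding Ncoef_def by (simp only: sgn_lemma)
    then show "fsum {rho. is_part n rho} (\<lambda>rho. (-1) ^ a * Ncoef n a rho mu * tbeta n j (r - a) lam rho)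
        = op_mult (tbeta n j (r - a)) (Qp n a) lam mu"
      using fsum_to_mult[OF n mu] by simp
  qed
  also have "\<dots> = op_mult (Qp n r) (beta j) lam mu"
    unfolding tbeta_def by (rule conj_sum[OF Bo.rep_eq n])
  also have "\<dots> = (\<Sum>rho\<in>{del_col j mu}. Qp n r lam rho * beta j rho mu)"
    by (rule op_mult_eq) (simp_all add: cs_beta)
  also have "\<dots> = (if 0 < mult j mu then (-1) ^ r * Ncoef n r lam (del_col j mu) else 0)"
    by (simp add: beta_def Ncoef_def sgn2)
  finally show "(\<Sum>a\<le>r. fsum {rho. is_part n rho}
            (\<lambda>rho. (-1) ^ a * Ncoef n a rho mu * tbeta n j (r - a) lam rho))
         = (if 0 < mult j mu then (-1) ^ r * Ncoef n r lam (del_col j mu) else 0)" .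
next
  note n = assms(1) and mu = assms(5)
  define c where "c = 1 - qq ^ (2 * mult j mu + 2)"
  have c: "c \<noteq> 0" unfolding c_def using qq_ne[of "2 * mult j mu + 1"] by simp
  have "(\<Sum>a\<le>r. fsum {rho. is_part n rho}
            (\<lambda>rho. (-1) ^ a * Ncoef n a rho mu / c * tbetaS n j (r - a) lam rho))
      = (\<Sum>a\<le>r. op_mult (tbetaS n j (r - a)) (Qp n a) lam mu / c)"
  proof (rule sum.cong[OF refl])
    fix a
    have "(\<lambda>rho. (-1) ^ a * Ncoef n a rho mu / c * tbetaS n j (r - a) lam rho)
        = (\<lambda>rho. (tbetaS n j (r - a) lam rho * Qp n a rho mu) / c)"
      unfolding Ncoef_def by (simp only: times_divide_eq_left[symmetric] divide_inverse mult.assoc[symmetric]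
           sgn_lemma, simp add: mult_ac)
    then show "fsum {rho. is_part n rho} (\<lambda>rho. (-1) ^ a * Ncoef n a rho mu / c * tbetaS n j (r - a) lam rho)
        = op_mult (tbetaS n j (r - a)) (Qp n a) lam mu / c"
      using fsum_to_mult[OF n mu] by (simp add: fsum_div)
  qed
  also have "\<dots> = (\<Sum>a\<le>r. op_mult (tbetaS n j (r - a)) (Qp n a) lam mu) / c"
    by (simp add: sum_divide_distrib)
  also have "(\<Sum>a\<le>r. op_mult (tbetaS n j (r - a)) (Qp n a) lam mu) = op_mult (Qp n r) (betaS j) lam mu"
    unfolding tbetaS_def by (rule conj_sum[OF BSo.rep_eq n])
  also have "\<dots> = (\<Sum>rho\<in>{ins_col j mu}. Qp n r lam rho * betaS j rho mu)"
    by (rule op_mult_eq) (simp_all add: cs_betaS)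
  also have "\<dots> = Qp n r lam (ins_col j mu) * c"
    by (simp add: betaS_def c_def)
  also have "\<dots> / c = (-1) ^ r * Ncoef n r lam (ins_col j mu)"
    using c by (simp add: Ncoef_def sgn2)
  finally show "(\<Sum>a\<le>r. fsum {rho. is_part n rho}
            (\<lambda>rho. (-1) ^ a * Ncoef n a rho mu / (1 - qq ^ (2 * mult j mu + 2)) * tbetaS n j (r - a) lam rho))
         = (-1) ^ r * Ncoef n r lam (ins_col j mu)" unfolding c_def .
qed


end
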